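(* Let $a_1,\dots,a_7$ and $\alpha_1,\dots,\alpha_7$ be positive real numbers with $\sum_{i=1}^7\alpha_i=\pi$. Then $$\sum_{i=1}^7 a_i\cos\alpha_i\;\le\;\cos\frac{\pi}{7}\cdot\frac{1}{a_1a_2\cdots a_7}\,\psi(a_1^2,a_2^2,\dots,a_7^2),$$ where $\psi(x_1,\dots,x_7)=x_1x_2x_3x_4+x_2x_3x_4x_5+x_3x_4x_5x_6+x_4x_5x_6x_7+x_5x_6x_7x_1+x_6x_7x_1x_2+x_7x_1x_2x_3$. *)

theory Defs
  imports Complex_Main
begin

definition psi7 :: "real \<Rightarrow> real \<Rightarrow> real \<Rightarrow> real \<Rightarrow> real \<Rightarrow> real \<Rightarrow> real \<Rightarrow> real" where
  "psi7 x1 x2 x3 x4 x5 x6 x7 =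
     x1*x2*x3*x4 + x2*x3*x4*x5 + x3*x4*x5*x6 + x4*x5*x6*x7
   + x5*x6*x7*x1 + x6*x7*x1*x2 + x7*x1*x2*x3"

end

theory Submission
  imports Defs
begin

lemma formA:
  fixes c y1 y2 y3 y4 y5 y6 y7 :: real
  assumes cub: "8*c^3 - 4*c^2 - 4*c + 1 = 0" and c0: "c > 0" and c1: "c < 1" and c2: "2*c^2 > 1"
  shows "y1*y2 + y2*y3 + y3*y4 + y4*y5 + y5*y6 + y6*y7 - y7*y1
         \<le> c*(y1^2+y2^2+y3^2+y4^2+y5^2+y6^2+y7^2)"
proof -
  define G1 where "G1 = (-1)*y6*y7 + (-1)*y5*y6 + (-1)*y4*y5 + (-1)*y3*y4 + (-1)*y2*y3 + (1)*y1*y7 + (-1)*y1*y2 + (1)*c*y7^2 + (1)*c*y6^2 + (1)*c*y5^2 + (1)*c*y4^2 + (1)*c*y3^2 + (1)*c*y2^2 + (1)*c*y1^2"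
  define T1 where "T1 = ((1)*c)*((2)*y7 + (-2)*y2 + (1)*y1 + (2)*c*y7 + (-2)*c*y2 + (-4)*c^2*y7 + (4)*c^2*y2)^2"
  define G2 where "G2 = (-1)*y7^2 + (-1)*y6*y7 + (-1)*y5*y6 + (-1)*y4*y5 + (-1)*y3*y4 + (2)*y2*y7 + (-1)*y2*y3 + (-1)*y2^2 + (1)*c*y6^2 + (1)*c*y5^2 + (1)*c*y4^2 + (1)*c*y3^2 + (2)*c*y2*y7 + (2)*c^2*y7^2 + (-4)*c^2*y2*y7 + (2)*c^2*y2^2"
  define T2 where "T2 = ((-1)*1 + (2)*c^2)*((-1)*y7 + (1)*y3 + (1)*y2 + (-2)*c*y7 + (-2)*c*y3 + (4)*c^2*y7)^2"
  define G3 where "G3 = (1/2)*y7^2 + (-1)*y6*y7 + (-1)*y5*y6 + (-1)*y4*y5 + (-1)*y3*y7 + (-1)*y3*y4 + (1/2)*y3^2 + (1)*c*y6^2 + (1)*c*y5^2 + (1)*c*y4^2 + (-2)*c*y3*y7 + (4)*c^2*y3*y7"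
  define T3 where "T3 = ((1/2)*1)*((-1)*y7 + (-1)*y4 + (1)*y3 + (-2)*c*y7 + (4)*c^2*y7)^2"
  define G4 where "G4 = (-1/2)*y7^2 + (-1)*y6*y7 + (-1)*y5*y6 + (-1)*y4*y7 + (-1)*y4*y5 + (-1/2)*y4^2 + (1)*c*y7^2 + (1)*c*y6^2 + (1)*c*y5^2 + (-2)*c*y4*y7 + (1)*c*y4^2 + (4)*c^2*y4*y7"
  define T4 where "T4 = ((-1/2)*1 + (1)*c)*((2)*y7 + (2)*y5 + (1)*y4 + (2)*c*y7 + (-4)*c^2*y7 + (-4)*c^2*y5)^2"
  define G5 where "G5 = (1)*y7^2 + (-1)*y6*y7 + (2)*y5*y7 + (-1)*y5*y6 + (1)*y5^2 + (1)*c*y7^2 + (1)*c*y6^2 + (2)*c*y5*y7 + (1)*c*y5^2 + (-2)*c^2*y7^2 + (-4)*c^2*y5*y7 + (-2)*c^2*y5^2"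
  define T5 where "T5 = ((1)*1 + (1)*c + (-2)*c^2)*((1)*y7 + (1)*y5 + (-2)*c*y6)^2"
  have s1: "G1 = T1 + G2 + (8*c^3 - 4*c^2 - 4*c + 1)*((1)*y7^2 + (-2)*y2*y7 + (1)*y2^2 + (1)*y1*y7 + (-1)*y1*y2 + (1)*c*y7^2 + (-2)*c*y2*y7 + (1)*c*y2^2 + (-2)*c^2*y7^2 + (4)*c^2*y2*y7 + (-2)*c^2*y2^2)"
    unfolding G1_def T1_def G2_def by (simp add: algebra_simps power2_eq_square power3_eq_cube)
  have s2: "G2 = T2 + G3 + (8*c^3 - 4*c^2 - 4*c + 1)*((-1/2)*y7^2 + (-1)*y3*y7 + (1/2)*y3^2 + (1)*y2*y3 + (2)*c*y7^2 + (-2)*c*y3*y7 + (-1)*c*y3^2 + (-2)*c*y2*y7 + (2)*c^2*y7^2 + (4)*c^2*y3*y7 + (-4)*c^3*y7^2)"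
    unfolding G2_def T2_def G3_def by (simp add: algebra_simps power2_eq_square power3_eq_cube)
  have s3: "G3 = T3 + G4 + (8*c^3 - 4*c^2 - 4*c + 1)*((1/2)*y7^2 + (-1)*c*y7^2)"
    unfolding G3_def T3_def G4_def by (simp add: algebra_simps power2_eq_square power3_eq_cube)
  have s4: "G4 = T4 + G5 + (8*c^3 - 4*c^2 - 4*c + 1)*((1/2)*y7^2 + (2)*y5*y7 + (1)*y5^2 + (1)*y4*y7 + (1)*y4*y5 + (2)*c*y7^2 + (2)*c*y5*y7 + (-2)*c^2*y7^2 + (-4)*c^2*y5*y7 + (-2)*c^2*y5^2)"
    unfolding G4_def T4_def G5_def by (simp add: algebra_simps power2_eq_square power3_eq_cube)
  have s5: "G5 = T5 + 0 + (8*c^3 - 4*c^2 - 4*c + 1)*((-1)*y6*y7 + (-1)*y5*y6 + (1)*c*y6^2)"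
    unfolding G5_def T5_def  by (simp add: algebra_simps power2_eq_square power3_eq_cube)
  have nn: "0 \<le> T1 + T2 + T3 + T4 + T5"
  proof -
    have "(1+c-2*c^2) = (1-c)*(1+2*c)" by (simp add: algebra_simps power2_eq_square)
    then have p5: "(1+c-2*c^2) > 0" using c0 c1 by simp
    have "c*c < c*1" using c1 c0 by (rule mult_strict_left_mono)
    then have p4: "c - 1/2 > 0" using c2 by (simp add: power2_eq_square)
    have d1: "0 \<le> (1)*c" using c0 c2 p4 p5 by simp
    have q1: "0 \<le> T1" unfolding T1_def by (rule mult_nonneg_nonneg[OF d1 zero_le_power2])
    have d2: "0 \<le> (-1)*1 + (2)*c^2" using c0 c2 p4 p5 by simp
    have q2: "0 \<le> T2" unfolding T2_def by (rule mult_nonneg_nonneg[OF d2 zero_le_power2])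
    have d3: "0 \<le> (1/2)*(1::real)" using c0 c2 p4 p5 by simp
    have q3: "0 \<le> T3" unfolding T3_def by (rule mult_nonneg_nonneg[OF d3 zero_le_power2])
    have d4: "0 \<le> (-1/2)*1 + (1)*c" using c0 c2 p4 p5 by simp
    have q4: "0 \<le> T4" unfolding T4_def by (rule mult_nonneg_nonneg[OF d4 zero_le_power2])
    have d5: "0 \<le> (1)*1 + (1)*c + (-2)*c^2" using c0 c2 p4 p5 by simp
    have q5: "0 \<le> T5" unfolding T5_def by (rule mult_nonneg_nonneg[OF d5 zero_le_power2])
    show ?thesis using q1 q2 q3 q4 q5 by linarith
  qed
  have "c*(y1^2+y2^2+y3^2+y4^2+y5^2+y6^2+y7^2) - (y1*y2 + y2*y3 + y3*y4 + y4*y5 + y5*y6 + y6*y7 - y7*y1) = G1"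
    unfolding G1_def by (simp add: algebra_simps power2_eq_square)
  also have "\<dots> = T1 + T2 + T3 + T4 + T5"
  proof -
    have r1: "G1 = T1 + G2" using s1 by (simp only: cub mult_zero_left add_0_right)
    have r2: "G2 = T2 + G3" using s2 by (simp only: cub mult_zero_left add_0_right)
    have r3: "G3 = T3 + G4" using s3 by (simp only: cub mult_zero_left add_0_right)
    have r4: "G4 = T4 + G5" using s4 by (simp only: cub mult_zero_left add_0_right)
    have r5: "G5 = T5" using s5 by (simp only: cub mult_zero_left add_0_right)
    show ?thesis using r1 r2 r3 r4 r5 by linarith
  qed
  finally show ?thesis using nn by simp
qed


lemma cfacts: "8*cos(pi/7)^3 - 4*cos(pi/7)^2 - 4*cos(pi/7) + 1 = 0 \<and> cos(pi/7) > 0 \<and> cos(pi/7) < 1 \<and> 2*cos(pi/7)^2 > 1"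
proof -
  define c where "c = cos (pi/7)"
  have h3: "cos (3*(pi/7)) = 4*c^3 - 3*c" unfolding c_def by (rule cos_treble_cos)
  have h2: "cos (2*(pi/7)) = 2*c^2 - 1" unfolding c_def by (rule cos_double_cos)
  have h4: "cos (2*(2*(pi/7))) = 2*(cos (2*(pi/7)))^2 - 1" by (rule cos_double_cos)
  have e: "2*(2*(pi/7)) = pi - 3*(pi/7)" by simp
  have "cos (2*(2*(pi/7))) = - cos (3*(pi/7))" by (subst e, rule cos_pi_minus)
  with h3 h2 h4 have "2*(2*c^2-1)^2 - 1 = -(4*c^3 - 3*c)" by simp
  then have "(c+1)*(8*c^3 - 4*c^2 - 4*c + 1) = 0" by (simp add: algebra_simps power2_eq_square power3_eq_cube)
  moreover have cpos: "c > 0" unfolding c_def by (rule cos_gt_zero_pi) (use pi_gt_zero in linarith)+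
  ultimately have cub: "8*c^3 - 4*c^2 - 4*c + 1 = 0" by simp
  have "cos (pi/7) < cos 0" using cos_mono_less_eq[of "pi/7" 0] pi_gt_zero by simp
  then have c1: "c < 1" unfolding c_def by simp
  have "cos (pi/4) < cos (pi/7)" using cos_mono_less_eq[of "pi/4" "pi/7"] pi_gt_zero by simp
  then have "sqrt 2 / 2 < c" unfolding c_def cos_45 .
  then have "(sqrt 2 / 2)^2 < c^2" by (intro power_strict_mono) auto
  then have "2*c^2 > 1" by (simp add: power_divide)
  with cub cpos c1 show ?thesis unfolding c_def by simp
qed

lemma edl: "(xa::real)*xb*cos (q - p) = (xa*cos p)*(xb*cos q) + (xa*sin p)*(xb*sin q)"
proof -
  have "cos (q - p) = cos q * cos p + sin q * sin p" by (rule cos_diff)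
  then show ?thesis by (simp add: algebra_simps)
qed

lemma sql: "(x::real)^2 = (x*cos p)^2 + (x*sin p)^2"
proof -
  have "(x*cos p)^2 + (x*sin p)^2 = x^2*((cos p)^2 + (sin p)^2)" by (simp only: power_mult_distrib distrib_left)
  also have "\<dots> = x^2 * 1" by (simp only: sin_cos_squared_add2)
  finally show ?thesis by simp
qed

lemma key:
  fixes x1 x2 x3 x4 x5 x6 x7 b1 b2 b3 b4 b5 b6 b7 :: real
  assumes hs: "b1+b2+b3+b4+b5+b6+b7 = pi"
  shows "x1*x2*cos b1 + x2*x3*cos b2 + x3*x4*cos b3 + x4*x5*cos b4 + x5*x6*cos b5 + x6*x7*cos b6 + x7*x1*cos b7
     \<le> cos(pi/7)*(x1^2+x2^2+x3^2+x4^2+x5^2+x6^2+x7^2)"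
proof -
  define c where "c = cos (pi/7)"
  have cf: "8*c^3 - 4*c^2 - 4*c + 1 = 0" "c > 0" "c < 1" "2*c^2 > 1" using cfacts unfolding c_def by auto
  define p2 where "p2 = b1"
  define p3 where "p3 = p2 + b2"
  define p4 where "p4 = p3 + b3"
  define p5 where "p5 = p4 + b4"
  define p6 where "p6 = p5 + b5"
  define p7 where "p7 = p6 + b6"
  have b7: "b7 = pi - p7" using hs unfolding p7_def p6_def p5_def p4_def p3_def p2_def by simp
  have e1: "x1*x2*cos b1 = x1*(x2*cos p2)" unfolding p2_def by simp
  note ed = edl
  have e2: "x2*x3*cos b2 = (x2*cos p2)*(x3*cos p3) + (x2*sin p2)*(x3*sin p3)"
    using ed[of x2 x3 p2 p3] unfolding p3_def by simp
  have e3: "x3*x4*cos b3 = (x3*cos p3)*(x4*cos p4) + (x3*sin p3)*(x4*sin p4)"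
    using ed[of x3 x4 p3 p4] unfolding p4_def by simp
  have e4: "x4*x5*cos b4 = (x4*cos p4)*(x5*cos p5) + (x4*sin p4)*(x5*sin p5)"
    using ed[of x4 x5 p4 p5] unfolding p5_def by simp
  have e5: "x5*x6*cos b5 = (x5*cos p5)*(x6*cos p6) + (x5*sin p5)*(x6*sin p6)"
    using ed[of x5 x6 p5 p6] unfolding p6_def by simp
  have e6: "x6*x7*cos b6 = (x6*cos p6)*(x7*cos p7) + (x6*sin p6)*(x7*sin p7)"
    using ed[of x6 x7 p6 p7] unfolding p7_def by simp
  have e7: "x7*x1*cos b7 = - ((x7*cos p7)*x1)" unfolding b7 by simp
  note sq = sql
  have A1: "x1*(x2*cos p2) + (x2*cos p2)*(x3*cos p3) + (x3*cos p3)*(x4*cos p4) + (x4*cos p4)*(x5*cos p5)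
      + (x5*cos p5)*(x6*cos p6) + (x6*cos p6)*(x7*cos p7) - (x7*cos p7)*x1
      \<le> c*(x1^2 + (x2*cos p2)^2 + (x3*cos p3)^2 + (x4*cos p4)^2 + (x5*cos p5)^2 + (x6*cos p6)^2 + (x7*cos p7)^2)"
    using formA[OF cf] by blast
  have A2: "0*(x2*sin p2) + (x2*sin p2)*(x3*sin p3) + (x3*sin p3)*(x4*sin p4) + (x4*sin p4)*(x5*sin p5)
      + (x5*sin p5)*(x6*sin p6) + (x6*sin p6)*(x7*sin p7) - (x7*sin p7)*0
      \<le> c*(0^2 + (x2*sin p2)^2 + (x3*sin p3)^2 + (x4*sin p4)^2 + (x5*sin p5)^2 + (x6*sin p6)^2 + (x7*sin p7)^2)"
    using formA[OF cf] by blast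
  have S: "x1^2+x2^2+x3^2+x4^2+x5^2+x6^2+x7^2 = (x1^2 + (x2*cos p2)^2 + (x3*cos p3)^2 + (x4*cos p4)^2 + (x5*cos p5)^2 + (x6*cos p6)^2 + (x7*cos p7)^2)
     + (0^2 + (x2*sin p2)^2 + (x3*sin p3)^2 + (x4*sin p4)^2 + (x5*sin p5)^2 + (x6*sin p6)^2 + (x7*sin p7)^2)"
    using sq[of x2 p2] sq[of x3 p3] sq[of x4 p4] sq[of x5 p5] sq[of x6 p6] sq[of x7 p7] by simp
  show ?thesis unfolding e1 e2 e3 e4 e5 e6 e7 c_def[symmetric] S
    using A1 A2 by (simp add: algebra_simps)
qed

theorem theorem3:
  fixes a \<alpha> :: "nat \<Rightarrow> real"
  assumes "\<And>i. i \<in> {1..7} \<Longrightarrow> a i > 0"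
      and "\<And>i. i \<in> {1..7} \<Longrightarrow> \<alpha> i > 0"
      and "(\<Sum>i=1..7. \<alpha> i) = pi"
  shows "(\<Sum>i=1..7. a i * cos (\<alpha> i))
         \<le> cos (pi / 7) * (1 / (\<Prod>i=1..7. a i))
            * psi7 ((a 1)^2) ((a 2)^2) ((a 3)^2) ((a 4)^2) ((a 5)^2) ((a 6)^2) ((a 7)^2)"
proof -
  have I: "{1..7::nat} = {1,2,3,4,5,6,7}" by auto
  have pos: "a 1 > 0" "a 2 > 0" "a 3 > 0" "a 4 > 0" "a 5 > 0" "a 6 > 0" "a 7 > 0"
    using assms(1) by auto
  define P where "P = a 1 * a 2 * a 3 * a 4 * a 5 * a 6 * a 7"
  have Pp: "P > 0" unfolding P_def using pos by simp
  have prodP: "(\<Prod>i=1..7. a i) = P" unfolding I P_def by (simp add: algebra_simps)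
  have hs: "\<alpha> 4 + \<alpha> 7 + \<alpha> 3 + \<alpha> 6 + \<alpha> 2 + \<alpha> 5 + \<alpha> 1 = pi"
    using assms(3) unfolding I by (simp add: algebra_simps)
  define r where "r = sqrt P"
  have rp: "r > 0" unfolding r_def using Pp by simp
  have r2: "r^2 = P" unfolding r_def using Pp by simp
  define X where "X i = a i * a (i+1) * a (i+2) * a (i+3) / r" for i
  define X1 where "X1 = a 1 * a 2 * a 3 * a 4 / r"
  define X2 where "X2 = a 2 * a 3 * a 4 * a 5 / r"
  define X3 where "X3 = a 3 * a 4 * a 5 * a 6 / r"
  define X4 where "X4 = a 4 * a 5 * a 6 * a 7 / r"
  define X5 where "X5 = a 5 * a 6 * a 7 * a 1 / r"
  define X6 where "X6 = a 6 * a 7 * a 1 * a 2 / r"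
  define X7 where "X7 = a 7 * a 1 * a 2 * a 3 / r"
  have m: "\<And>u v w. u * v = w * P \<Longrightarrow> (u / r) * (v / r) = w"
    using rp r2 Pp by (simp add: field_simps power2_eq_square)
  have p14: "X1*X4 = a 4" unfolding X1_def X4_def by (rule m) (simp add: P_def algebra_simps)
  have p47: "X4*X7 = a 7" unfolding X4_def X7_def by (rule m) (simp add: P_def algebra_simps)
  have p73: "X7*X3 = a 3" unfolding X7_def X3_def by (rule m) (simp add: P_def algebra_simps)
  have p36: "X3*X6 = a 6" unfolding X3_def X6_def by (rule m) (simp add: P_def algebra_simps)
  have p62: "X6*X2 = a 2" unfolding X6_def X2_def by (rule m) (simp add: P_def algebra_simps)
  have p25: "X2*X5 = a 5" unfolding X2_def X5_def by (rule m) (simp add: P_def algebra_simps)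
  have p51: "X5*X1 = a 1" unfolding X5_def X1_def by (rule m) (simp add: P_def algebra_simps)
  note K = key[OF hs, of X1 X4 X7 X3 X6 X2 X5]
  have L: "(\<Sum>i=1..7. a i * cos (\<alpha> i)) = X1*X4*cos (\<alpha> 4) + X4*X7*cos (\<alpha> 7) + X7*X3*cos (\<alpha> 3)
      + X3*X6*cos (\<alpha> 6) + X6*X2*cos (\<alpha> 2) + X2*X5*cos (\<alpha> 5) + X5*X1*cos (\<alpha> 1)"
    unfolding p14 p47 p73 p36 p62 p25 p51 I by (simp add: algebra_simps)
  have sqd: "\<And>u. (u / r)^2 = u^2 / P" using r2 by (simp add: power_divide)
  have R: "X1^2+X4^2+X7^2+X3^2+X6^2+X2^2+X5^2 = (1 / (\<Prod>i=1..7. a i))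
            * psi7 ((a 1)^2) ((a 2)^2) ((a 3)^2) ((a 4)^2) ((a 5)^2) ((a 6)^2) ((a 7)^2)"
    unfolding prodP X1_def X2_def X3_def X4_def X5_def X6_def X7_def sqd psi7_def
    using Pp by (simp add: field_simps power_mult_distrib)
  show ?thesis using K unfolding L R by (simp add: mult.assoc)
qed

end
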